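(* For every integer $m\ge2$ and every $\alpha\in[0,1]$, the randomized rule \textsc{SmartDictatorship} (with parameter $\alpha$) has distortion at most $2+\alpha-2/m$ on $\alpha$-decisive metric spaces.
   Context: An election: voters $V=\{1,\dots,n\}$, a fixed finite set $C$ of $m$ candidates, a profile of linear orders over $C$; $\mathrm{top}(i)$ is $i$'s first choice; $\mathrm{plu}(a)=|\{i:\mathrm{top}(i)=a\}|$. A distance function $d$ on $V\cup C$ is nonnegative, symmetric and satisfies the triangle inequality (co-location allowed); consistent with the profile if $d(i,c)\le d(i,c')$ whenever $i$ ranks $c$ above $c'$; $\alpha$-decisive if $d(i,\mathrm{top}(i))\le\alpha\,d(i,c)$ for all $i$ and $c\ne\mathrm{top}(i)$. $\mathrm{SC}(c)=\sum_i d(i,c)$. The distortion of a randomized rule $f$ on $\alpha$-decisive spaces is $\sup_\sigma\sup_d \mathbb{E}[\mathrm{SC}(f(\sigma))]/\min_c\mathrm{SC}(c)$ over $\alpha$-decisive consistent $d$. \textsc{SmartDictatorship}: if some candidate $a$ has $\mathrm{plu}(a)\ge(1+\alpha)n/2$, it chooses one such candidate (arbitrarily) with probability $1$; otherwise it chooses each candidate $a$ with probability proportional to $\mathrm{plu}(a)/\bigl(n-\frac{2}{1+\alpha}\mathrm{plu}(a)\bigr)$. *)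

theory Defs
  imports Complex_Main
begin

text \<open>A profile is P :: 'v => ('c * 'c) set where each P i is a linear
order on the candidates; (c, c') in P i means voter i ranks c at least as high as c'.
Points of the (pseudo)metric space are elements of 'v + 'c.\<close>

definition top_choice :: "('c \<times> 'c) set \<Rightarrow> 'c" where
  "top_choice R = (THE c. \<forall>c'. (c, c') \<in> R)"

definition plu :: "('v::finite \<Rightarrow> ('c \<times> 'c) set) \<Rightarrow> 'c \<Rightarrow> nat" where
  "plu P a = card {i. top_choice (P i) = a}"

definition is_distance :: "('a \<Rightarrow> 'a \<Rightarrow> real) \<Rightarrow> bool" where
  "is_distance d \<longleftrightarrow>
     (\<forall>x y. 0 \<le> d x y) \<and> (\<forall>x. d x x = 0) \<and> (\<forall>x y. d x y = d y x) \<and>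
     (\<forall>x y z. d x z \<le> d x y + d y z)"

definition consistent ::
  "('v \<Rightarrow> ('c \<times> 'c) set) \<Rightarrow> ('v + 'c \<Rightarrow> 'v + 'c \<Rightarrow> real) \<Rightarrow> bool" where
  "consistent P d \<longleftrightarrow>
     (\<forall>i c c'. (c, c') \<in> P i \<and> c \<noteq> c' \<longrightarrow> d (Inl i) (Inr c) \<le> d (Inl i) (Inr c'))"

definition decisive ::
  "real \<Rightarrow> ('v \<Rightarrow> ('c \<times> 'c) set) \<Rightarrow> ('v + 'c \<Rightarrow> 'v + 'c \<Rightarrow> real) \<Rightarrow> bool" where
  "decisive \<alpha> P d \<longleftrightarrow>
     (\<forall>i c. c \<noteq> top_choice (P i) \<longrightarrow>
        d (Inl i) (Inr (top_choice (P i))) \<le> \<alpha> * d (Inl i) (Inr c))"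

definition SC :: "('v::finite + 'c \<Rightarrow> 'v + 'c \<Rightarrow> real) \<Rightarrow> 'c \<Rightarrow> real" where
  "SC d c = (\<Sum>i\<in>(UNIV::'v set). d (Inl i) (Inr c))"

definition sd_weight :: "real \<Rightarrow> ('v::finite \<Rightarrow> ('c \<times> 'c) set) \<Rightarrow> 'c \<Rightarrow> real" where
  "sd_weight \<alpha> P a =
     real (plu P a) / (real (card (UNIV::'v set)) - 2 / (1 + \<alpha>) * real (plu P a))"

text \<open>The set of possible output lotteries (probability functions on candidates) of
SmartDictatorship; in the dictatorial case the choice among qualifying candidates is
arbitrary, so every such choice is a possible output.\<close>
definition smart_dictatorship ::
  "real \<Rightarrow> ('v::finite \<Rightarrow> ('c::finite \<times> 'c) set) \<Rightarrow> ('c \<Rightarrow> real) set" where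
  "smart_dictatorship \<alpha> P =
     (if \<exists>a. real (plu P a) \<ge> (1 + \<alpha>) * real (card (UNIV::'v set)) / 2
      then {(\<lambda>x. if x = a then 1 else 0) | a. real (plu P a) \<ge> (1 + \<alpha>) * real (card (UNIV::'v set)) / 2}
      else {(\<lambda>a. sd_weight \<alpha> P a / (\<Sum>b\<in>UNIV. sd_weight \<alpha> P b))})"

end

theory Submission
  imports Defs
begin

lemma tangent_ineq:
  fixes x n b x0 :: real
  assumes y: "n - b*x > 0" and y0: "n - b*x0 > 0" and b: "b \<ge> 0" and n: "n \<ge> 0"
  shows "x/(n-b*x) \<ge> x0/(n-b*x0) + n*(x-x0)/(n-b*x0)^2"
proof -
  define y where "y = n - b*x"
  define y0' where "y0' = n - b*x0"
  have yp: "y > 0" "y0' > 0" using y y0 unfolding y_def y0'_def by auto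
  have id: "x*y0'^2 - (x0*y0' + n*(x-x0))*y = n*b*(x-x0)^2"
    unfolding y_def y0'_def by (simp add: power2_eq_square algebra_simps)
  have "n*b*(x-x0)^2 \<ge> 0" using b n by simp
  hence le: "(x0*y0' + n*(x-x0))*y \<le> x*y0'^2" using id by simp
  have "x0/y0' + n*(x-x0)/y0'^2 = ((x0*y0' + n*(x-x0))*y) / (y*y0'^2)"
    using yp by (simp add: field_simps power2_eq_square)
  also have "\<dots> \<le> (x*y0'^2) / (y*y0'^2)"
    using yp le by (intro divide_right_mono) auto
  also have "\<dots> = x / y" using yp by simp
  finally show ?thesis unfolding y_def y0'_def .
qed

theorem theorem3:
  fixes \<alpha> :: real
    and P :: "'v::finite \<Rightarrow> ('c::finite \<times> 'c) set"
    and d :: "'v + 'c \<Rightarrow> 'v + 'c \<Rightarrow> real"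
    and p :: "'c \<Rightarrow> real"
    and c :: 'c
  assumes "card (UNIV::'c set) \<ge> 2"
    and "0 \<le> \<alpha>" and "\<alpha> \<le> 1"
    and "\<forall>i. linear_order (P i)"
    and "is_distance d"
    and "consistent P d"
    and "decisive \<alpha> P d"
    and "p \<in> smart_dictatorship \<alpha> P"
  shows "(\<Sum>a\<in>UNIV. p a * SC d a) \<le> (2 + \<alpha> - 2 / real (card (UNIV::'c set))) * SC d c"
proof -
  define n where "n = real (card (UNIV::'v set))"
  define m where "m = real (card (UNIV::'c set))"
  define t where "t = (\<lambda>i. top_choice (P i))"
  define D where "D = (\<lambda>i x. d (Inl i) (Inr x))"
  define S where "S = (\<lambda>a. \<Sum>i\<in>UNIV. if t i = a then D i c else 0)"
  define K where "K = (\<lambda>a. \<Sum>i\<in>(UNIV::'v set). if t i = a then 1 else (0::real))"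
  have m2: "m \<ge> 2" using assms(1) unfolding m_def by simp
  have n1: "n \<ge> 1" unfolding n_def by (simp add: Suc_le_eq card_gt_0_iff)
  have dist: "is_distance d" by fact
  have dpos: "\<And>x y. 0 \<le> d x y" and dsym: "\<And>x y. d x y = d y x"
    and dtri: "\<And>x y z. d x z \<le> d x y + d y z"
    using dist unfolding is_distance_def by auto
  have dec: "\<And>i x. x \<noteq> t i \<Longrightarrow> D i (t i) \<le> \<alpha> * D i x"
    using assms(7) unfolding decisive_def t_def D_def by auto
  have Dpos: "\<And>i x. 0 \<le> D i x" unfolding D_def using dpos by auto
  have SCD: "\<And>a. SC d a = (\<Sum>i\<in>UNIV. D i a)" unfolding SC_def D_def by simp
  have KP: "\<And>a. real (plu P a) = K a"
    unfolding plu_def K_def t_def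
    by (simp add: sum.inter_filter[symmetric])
  have Spos: "\<And>a. S a \<ge> 0" unfolding S_def by (intro sum_nonneg) (simp add: Dpos)
  have Kpos: "\<And>a. K a \<ge> 0" unfolding K_def by (intro sum_nonneg) simp
  have Kle: "\<And>a. K a \<le> n"
  proof -
    fix a
    have "K a \<le> (\<Sum>i\<in>(UNIV::'v set). 1)" unfolding K_def by (intro sum_mono) simp
    thus "K a \<le> n" unfolding n_def by simp
  qed
  have sumS: "(\<Sum>a\<in>UNIV. S a) = SC d c"
    unfolding S_def SCD by (subst sum.swap) simp
  have sumK: "(\<Sum>a\<in>UNIV. K a) = n"
    unfolding K_def n_def by (subst sum.swap) simp
  have SCpos: "SC d c \<ge> 0" unfolding SCD by (intro sum_nonneg) (simp add: Dpos)
  have key: "K a * SC d a \<le> K a * SC d c + ((1+\<alpha>)*n - 2*K a) * S a" if "a \<noteq> c" for a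
  proof -
    define dac where "dac = d (Inr a) (Inr c)"
    have pw: "D i a \<le> D i c + dac - (if t i = a then (1-\<alpha>)*D i c + dac else 0)" for i
    proof (cases "t i = a")
      case True
      then show ?thesis using dec[of c i] that by (auto simp: algebra_simps)
    next
      case False
      have "d (Inl i) (Inr a) \<le> d (Inl i) (Inr c) + d (Inr c) (Inr a)" by (rule dtri)
      then show ?thesis using False unfolding D_def dac_def by (simp add: dsym[of "Inr c"])
    qed
    have "SC d a \<le> (\<Sum>i\<in>UNIV. D i c + dac - (if t i = a then (1-\<alpha>)*D i c + dac else 0))"
      unfolding SCD by (intro sum_mono pw)
    also have "\<dots> = SC d c + n*dac - ((1-\<alpha>) * S a + dac * K a)"
    proof -
      have e2: "(\<Sum>i\<in>UNIV. if t i = a then (1-\<alpha>)*D i c + dac else 0) = (1-\<alpha>)*S a + dac*K a"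
        unfolding S_def K_def sum_distrib_left sum.distrib[symmetric] by (rule sum.cong) auto
      show ?thesis
        unfolding sum_subtractf sum.distrib e2 by (simp add: SCD n_def)
    qed
    finally have h1: "SC d a \<le> SC d c + (n - K a)*dac - (1-\<alpha>) * S a"
      by (simp add: algebra_simps)
    have pw2: "(if t i = a then dac else 0) \<le> (1+\<alpha>) * (if t i = a then D i c else 0)" for i
    proof (cases "t i = a")
      case True
      have "d (Inr a) (Inr c) \<le> d (Inr a) (Inl i) + d (Inl i) (Inr c)" by (rule dtri)
      moreover have "D i a \<le> \<alpha> * D i c" using dec[of c i] True that by auto
      ultimately show ?thesis using True unfolding D_def dac_def
        by (simp add: dsym[of "Inr a"] algebra_simps)
    qed simp
    have "(\<Sum>i\<in>UNIV. (if t i = a then dac else 0)) \<le> (\<Sum>i\<in>UNIV. (1+\<alpha>) * (if t i = a then D i c else 0))"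
      by (intro sum_mono pw2)
    moreover have "(\<Sum>i\<in>UNIV. (if t i = a then dac else 0)) = K a * dac"
      unfolding K_def sum_distrib_right by (rule sum.cong) auto
    ultimately have h2: "K a * dac \<le> (1+\<alpha>) * S a"
      unfolding S_def by (simp add: sum_distrib_left[symmetric])
    have h3: "K a * SC d a \<le> K a * (SC d c + (n - K a)*dac - (1-\<alpha>) * S a)"
      by (intro mult_left_mono h1 Kpos)
    have h4: "(n - K a) * (K a * dac) \<le> (n - K a) * ((1+\<alpha>) * S a)"
      using Kle[of a] by (intro mult_left_mono h2) auto
    show ?thesis using h3 h4 by (simp add: algebra_simps)
  qed
  have coef1: "2 + \<alpha> - 2 / m \<ge> 1"
  proof -
    have "2 / m \<le> 1" using m2 by simp
    thus ?thesis using assms(2) by simp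
  qed
  show ?thesis
  proof (cases "\<exists>a. real (plu P a) \<ge> (1 + \<alpha>) * real (card (UNIV::'v set)) / 2")
    case True
    then obtain a where a: "K a \<ge> (1 + \<alpha>) * n / 2"
      and p: "p = (\<lambda>x. if x = a then 1 else 0)"
      using assms(8) unfolding smart_dictatorship_def KP n_def by auto
    have lhs: "(\<Sum>x\<in>UNIV. p x * SC d x) = SC d a"
    proof -
      have "(\<Sum>x\<in>UNIV. p x * SC d x) = (\<Sum>x\<in>UNIV. if x = a then SC d x else 0)"
        unfolding p by (rule sum.cong) auto
      thus ?thesis by simp
    qed
    have "SC d a \<le> SC d c"
    proof (cases "a = c")
      case False
      have "(1 + \<alpha>) * n > 0" using n1 assms(2) by (intro mult_pos_pos) auto
      hence Kp: "K a > 0" using a by linarith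
      have "((1+\<alpha>)*n - 2*K a) * S a \<le> 0" using a Spos[of a]
        by (intro mult_nonpos_nonneg) auto
      hence "K a * SC d a \<le> K a * SC d c" using key[OF False] by simp
      thus ?thesis using Kp by simp
    qed simp
    also have "\<dots> \<le> (2 + \<alpha> - 2 / m) * SC d c"
      using coef1 SCpos by (simp add: mult_le_cancel_right1)
    finally show ?thesis using lhs unfolding m_def by simp
  next
    case False
    define \<beta> where "\<beta> = 2 / (1+\<alpha>)"
    have bpos: "\<beta> > 0" unfolding \<beta>_def using assms(2) by simp
    have Klt: "K a < (1+\<alpha>) * n / 2" for a using False unfolding KP n_def by (auto simp: not_le)
    have Dp: "n - \<beta> * K a > 0" for a
    proof -
      have "\<beta> * K a < \<beta> * ((1+\<alpha>) * n / 2)" using Klt[of a] bpos by simp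
      also have "\<dots> = n" unfolding \<beta>_def using assms(2) by simp
      finally show ?thesis by simp
    qed
    define w where "w = (\<lambda>a. K a / (n - \<beta> * K a))"
    define W where "W = (\<Sum>a\<in>UNIV. w a)"
    have wsd: "sd_weight \<alpha> P a = w a" for a
      unfolding sd_weight_def w_def KP \<beta>_def n_def by simp
    have p: "p = (\<lambda>a. w a / W)"
      using assms(8) False unfolding smart_dictatorship_def wsd W_def by auto
    have mb: "\<beta> < m"
    proof -
      have "n = (\<Sum>a\<in>UNIV. K a)" using sumK by simp
      also have "\<dots> < (\<Sum>a\<in>(UNIV::'c set). n / \<beta>)"
      proof (intro sum_strict_mono)
        fix a :: 'c
        show "K a < n / \<beta>" using Dp[of a] bpos by (simp add: field_simps)
      qed auto
      also have "\<dots> = m * n / \<beta>" unfolding m_def by simp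
      finally have "\<beta> * n < m * n" using bpos by (simp add: field_simps)
      thus ?thesis using n1 by simp
    qed
    define x0 where "x0 = n / m"
    have y0: "n - \<beta> * x0 > 0"
    proof -
      have "\<beta> * x0 = n * (\<beta> / m)" unfolding x0_def by simp
      also have "\<dots> < n * 1" using mb m2 n1 by (intro mult_strict_left_mono) auto
      finally show ?thesis by simp
    qed
    have tg: "w a \<ge> x0/(n-\<beta>*x0) + n*(K a-x0)/(n-\<beta>*x0)^2" for a
      unfolding w_def using tangent_ineq[OF Dp y0] bpos n1 by simp
    have "m * x0/(n-\<beta>*x0) = m * x0/(n-\<beta>*x0) + n*((\<Sum>a\<in>UNIV. K a) - m * x0)/(n-\<beta>*x0)^2"
      using sumK m2 unfolding x0_def by simp
    also have "\<dots> = (\<Sum>a\<in>(UNIV::'c set). x0/(n-\<beta>*x0) + n*(K a-x0)/(n-\<beta>*x0)^2)"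
      unfolding m_def by (simp add: sum.distrib sum_divide_distrib[symmetric] sum_distrib_left[symmetric] sum_subtractf)
    also have "\<dots> \<le> W"
      unfolding W_def by (intro sum_mono tg)
    finally have Wge: "W \<ge> m * x0/(n-\<beta>*x0)" .
    have "m * x0/(n-\<beta>*x0) > 0"
      using y0 m2 n1 unfolding x0_def by (intro divide_pos_pos mult_pos_pos) auto
    hence Wpos: "W > 0" using Wge by linarith
    have wbound: "w a * SC d a \<le> w a * SC d c + (1+\<alpha>) * S a" for a
    proof (cases "a = c")
      case True then show ?thesis using Spos[of a] assms(2) by simp
    next
      case False
      have e: "(1+\<alpha>)*n - 2*K a = (1+\<alpha>) * (n - \<beta> * K a)"
        unfolding \<beta>_def using assms(2) by (simp add: field_simps)
      have "K a * SC d a / (n - \<beta> * K a) \<le> (K a * SC d c + (1+\<alpha>) * (n - \<beta> * K a) * S a) / (n - \<beta> * K a)"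
        using key[OF False] Dp[of a] unfolding e by (intro divide_right_mono) (auto simp: algebra_simps)
      then show ?thesis using Dp[of a] unfolding w_def by (simp add: field_simps)
    qed
    have "(\<Sum>a\<in>UNIV. w a * SC d a) \<le> (\<Sum>a\<in>UNIV. w a * SC d c + (1+\<alpha>) * S a)"
      by (intro sum_mono wbound)
    also have "\<dots> = W * SC d c + (1+\<alpha>) * SC d c"
      unfolding W_def by (simp add: sum.distrib sum_distrib_left[symmetric] sum_distrib_right[symmetric] sumS)
    finally have sw: "(\<Sum>a\<in>UNIV. w a * SC d a) \<le> (W + 1 + \<alpha>) * SC d c" by (simp add: algebra_simps)
    have lhs: "(\<Sum>a\<in>UNIV. p a * SC d a) = (\<Sum>a\<in>UNIV. w a * SC d a) / W"
      unfolding p by (simp add: sum_divide_distrib)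
    have "(1+\<alpha>) / W \<le> 1 + \<alpha> - 2 / m"
    proof -
      have mx: "m * x0/(n-\<beta>*x0) = m / (m - \<beta>)"
        unfolding x0_def using m2 n1 mb by (simp add: field_simps)
      have "(1+\<alpha>) / W \<le> (1+\<alpha>) / (m / (m - \<beta>))"
        using Wge Wpos mb m2 assms(2) unfolding mx
        by (intro divide_left_mono) auto
      also have "\<dots> = ((1+\<alpha>)*m - (1+\<alpha>)*\<beta>)/m"
        using m2 by (simp add: algebra_simps)
      also have "(1+\<alpha>)*\<beta> = 2" unfolding \<beta>_def using assms(2) by (simp add: field_simps)
      also have "((1+\<alpha>)*m - 2)/m = 1 + \<alpha> - 2 / m"
        using m2 by (simp add: diff_divide_distrib)
      finally show ?thesis .
    qed
    hence "(W + 1 + \<alpha>) / W \<le> 2 + \<alpha> - 2 / m" using Wpos by (simp add: add_divide_distrib)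
    hence "(W + 1 + \<alpha>) / W * SC d c \<le> (2 + \<alpha> - 2 / m) * SC d c"
      using SCpos by (intro mult_right_mono) auto
    moreover have "(\<Sum>a\<in>UNIV. w a * SC d a) / W \<le> (W + 1 + \<alpha>) / W * SC d c"
      using sw Wpos by (simp add: divide_right_mono)
    ultimately show ?thesis unfolding lhs m_def by simp
  qed
qed

end
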